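(* Let $S$ be a closed connected oriented surface of genus $n\ge2$ and let $\chi\in H^1(S,\mathbb C)$ satisfy $\chi(H_1(S,\mathbb Z))=\mathbb Z+i\mathbb Z$ and $\omega(\chi)>0$. Then there is a symplectic basis $x_1,y_1,\dots,x_n,y_n$ of $H_1(S,\mathbb Z)$ such that $\chi(x_1)=\omega(\chi)$, $\chi(y_1)=i$, and for every $j=2,\dots,n$: $\chi(y_j)=0$ and $\chi(x_j)=a_j$ with $a_j$ an integer satisfying $0\le a_j<\omega(\chi)$.
   Context: A symplectic basis of $H_1(S,\mathbb Z)$ is a basis with intersection numbers $x_i\cdot y_j=\delta_{ij}$, $x_i\cdot x_j=y_i\cdot y_j=0$. $\omega(\chi):=\sum_{j=1}^n\mathrm{Im}(\overline{\chi(x_j)}\chi(y_j))$ for any symplectic basis (independent of the choice). *)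

theory Defs
  imports Complex_Main
begin

text \<open>Model of H_1(S,Z) for a closed oriented surface of genus n: the lattice Z^(2n),
  realised as integer sequences supported on indices below 2n.  Index 2j is the
  standard class a_(j+1), index 2j+1 the standard class b_(j+1) of a fixed standard
  symplectic basis (0-indexed j < n).\<close>

definition H1 :: "nat \<Rightarrow> (nat \<Rightarrow> int) set" where
  "H1 n = {v. \<forall>k\<ge>2*n. v k = 0}"

definition inter :: "nat \<Rightarrow> (nat \<Rightarrow> int) \<Rightarrow> (nat \<Rightarrow> int) \<Rightarrow> int" where
  "inter n v w = (\<Sum>j<n. v (2*j) * w (2*j+1) - v (2*j+1) * w (2*j))"

definition std_x :: "nat \<Rightarrow> nat \<Rightarrow> int" where
  "std_x j = (\<lambda>k. if k = 2*j then 1 else 0)"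
definition std_y :: "nat \<Rightarrow> nat \<Rightarrow> int" where
  "std_y j = (\<lambda>k. if k = 2*j+1 then 1 else 0)"

text \<open>An element of H^1(S,C) = Hom(H_1(S,Z), C): an additive map on H1 n.\<close>
definition is_char :: "nat \<Rightarrow> ((nat \<Rightarrow> int) \<Rightarrow> complex) \<Rightarrow> bool" where
  "is_char n chi \<longleftrightarrow> (\<forall>v\<in>H1 n. \<forall>w\<in>H1 n. chi (\<lambda>k. v k + w k) = chi v + chi w)"

definition symplectic_basis ::
  "nat \<Rightarrow> (nat \<Rightarrow> nat \<Rightarrow> int) \<Rightarrow> (nat \<Rightarrow> nat \<Rightarrow> int) \<Rightarrow> bool" where
  "symplectic_basis n x y \<longleftrightarrow>
     (\<forall>j<n. x j \<in> H1 n \<and> y j \<in> H1 n) \<and>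
     (\<forall>i<n. \<forall>j<n. inter n (x i) (y j) = (if i = j then 1 else 0)
                 \<and> inter n (x i) (x j) = 0 \<and> inter n (y i) (y j) = 0) \<and>
     (\<forall>v\<in>H1 n. \<exists>a b :: nat \<Rightarrow> int.
        v = (\<lambda>k. \<Sum>j<n. a j * x j k + b j * y j k)) \<and>
     (\<forall>a b :: nat \<Rightarrow> int. (\<lambda>k. \<Sum>j<n. a j * x j k + b j * y j k) = (\<lambda>k. 0)
        \<longrightarrow> (\<forall>j<n. a j = 0 \<and> b j = 0))"

text \<open>omega(chi), computed in the standard symplectic basis (the value is independent
  of the choice of symplectic basis).\<close>
definition omega :: "nat \<Rightarrow> ((nat \<Rightarrow> int) \<Rightarrow> complex) \<Rightarrow> real" where
  "omega n chi = (\<Sum>j<n. Im (cnj (chi (std_x j)) * chi (std_y j)))"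

end

theory Submission
  imports Defs
begin


definition lc :: "int \<Rightarrow> (nat\<Rightarrow>int) \<Rightarrow> (nat\<Rightarrow>int) \<Rightarrow> nat \<Rightarrow> int" where
  "lc c v w = (\<lambda>k. v k + c * w k)"

lemma H1_lc: "v \<in> H1 n \<Longrightarrow> w \<in> H1 n \<Longrightarrow> lc c v w \<in> H1 n"
  by (simp add: H1_def lc_def)

lemma inter_lc_left: "inter n (lc c v w) u = inter n v u + c * inter n w u"
  unfolding inter_def lc_def by (simp add: algebra_simps sum.distrib sum_subtractf sum_distrib_left)

lemma inter_lc_right: "inter n u (lc c v w) = inter n u v + c * inter n u w"
  unfolding inter_def lc_def by (simp add: algebra_simps sum.distrib sum_subtractf sum_distrib_left)

lemma inter_self: "inter n v v = 0"
  unfolding inter_def by (simp add: mult.commute)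

lemma inter_antisym: "inter n w v = - inter n v w"
  unfolding inter_def by (simp add: sum_negf[symmetric] algebra_simps)

lemma inter_comb: "inter n (\<lambda>k. \<Sum>j\<in>A. a j * x j k + b j * y j k) u
   = (\<Sum>j\<in>A. a j * inter n (x j) u + b j * inter n (y j) u)"
  unfolding inter_def
  by (simp add: sum_distrib_right sum_distrib_left sum_subtractf[symmetric] sum.distrib[symmetric] algebra_simps sum.swap[of _ A])



definition sp :: "nat \<Rightarrow> (nat\<Rightarrow>nat\<Rightarrow>int) \<Rightarrow> (nat\<Rightarrow>nat\<Rightarrow>int) \<Rightarrow> (nat\<Rightarrow>int) set" where
 "sp n x y = {v. \<exists>a b. v = (\<lambda>k. \<Sum>j<n. a j * x j k + b j * y j k)}"

lemma sp_lc: "v \<in> sp n x y \<Longrightarrow> w \<in> sp n x y \<Longrightarrow> lc c v w \<in> sp n x y"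
proof -
  assume "v \<in> sp n x y" "w \<in> sp n x y"
  then obtain a b a' b' where v: "v = (\<lambda>k. \<Sum>j<n. a j * x j k + b j * y j k)"
    and w: "w = (\<lambda>k. \<Sum>j<n. a' j * x j k + b' j * y j k)" unfolding sp_def by blast
  show ?thesis unfolding sp_def
    by (rule CollectI, rule exI[of _ "\<lambda>j. a j + c * a' j"], rule exI[of _ "\<lambda>j. b j + c * b' j"])
      (simp add: v w lc_def fun_eq_iff sum.distrib sum_distrib_left algebra_simps)
qed

lemma sp_x: "j < n \<Longrightarrow> x j \<in> sp n x y"
  unfolding sp_def
  by (rule CollectI, rule exI[of _ "\<lambda>i. of_bool (i = j)"], rule exI[of _ "\<lambda>i. 0"]) (simp add: fun_eq_iff)

lemma sp_y: "j < n \<Longrightarrow> y j \<in> sp n x y"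
  unfolding sp_def
  by (rule CollectI, rule exI[of _ "\<lambda>i. 0"], rule exI[of _ "\<lambda>i. of_bool (i = j)"]) (simp add: fun_eq_iff)

lemma sp_zero: "(\<lambda>k. 0) \<in> sp n x y"
  unfolding sp_def
  by (rule CollectI, rule exI[of _ "\<lambda>i. 0"], rule exI[of _ "\<lambda>i. 0"]) simp

lemma sp_mono:
  assumes "\<forall>j<n. x' j \<in> sp n x y \<and> y' j \<in> sp n x y"
  shows "sp n x' y' \<subseteq> sp n x y"
proof
  fix v assume "v \<in> sp n x' y'"
  then obtain a b where v: "v = (\<lambda>k. \<Sum>j<n. a j * x' j k + b j * y' j k)" unfolding sp_def by blast
  have "m \<le> n \<Longrightarrow> (\<lambda>k. \<Sum>j<m. a j * x' j k + b j * y' j k) \<in> sp n x y" for m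
  proof (induction m)
    case 0 then show ?case using sp_zero by simp
  next
    case (Suc m)
    have e: "(\<lambda>k. \<Sum>j<Suc m. a j * x' j k + b j * y' j k) =
       lc (b m) (lc (a m) (\<lambda>k. \<Sum>j<m. a j * x' j k + b j * y' j k) (x' m)) (y' m)"
      by (simp add: lc_def fun_eq_iff algebra_simps)
    show ?case unfolding e using Suc assms by (intro sp_lc) auto
  qed
  then show "v \<in> sp n x y" using v by simp
qed

lemma sb_intro:
  assumes "\<forall>j<n. x j \<in> H1 n \<and> y j \<in> H1 n"
    and tab: "\<forall>i<n. \<forall>j<n. inter n (x i) (y j) = (if i = j then 1 else 0)
                 \<and> inter n (x i) (x j) = 0 \<and> inter n (y i) (y j) = 0"
    and "H1 n \<subseteq> sp n x y"
  shows "symplectic_basis n x y"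
proof -
  have indep: "\<forall>a b :: nat \<Rightarrow> int. (\<lambda>k. \<Sum>j<n. a j * x j k + b j * y j k) = (\<lambda>k. 0)
        \<longrightarrow> (\<forall>j<n. a j = 0 \<and> b j = 0)"
  proof (intro allI impI conjI)
  fix a b :: "nat \<Rightarrow> int" and j
  assume z: "(\<lambda>k. \<Sum>j<n. a j * x j k + b j * y j k) = (\<lambda>k. 0)" and j: "j < n"
  have z0: "inter n (\<lambda>k. 0) u = 0" for u by (simp add: inter_def)
  have "0 = inter n (\<lambda>k. \<Sum>j<n. a j * x j k + b j * y j k) (y j)" using z z0 by simp
  also have "\<dots> = (\<Sum>i<n. a i * inter n (x i) (y j) + b i * inter n (y i) (y j))" by (rule inter_comb)
  also have "\<dots> = (\<Sum>i<n. a i * of_bool (i = j))"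
    by (rule sum.cong) (use tab j in auto)
  also have "\<dots> = a j" using j by simp
  finally show "a j = 0" by simp
  have "0 = inter n (\<lambda>k. \<Sum>j<n. a j * x j k + b j * y j k) (x j)" using z z0 by simp
  also have "\<dots> = (\<Sum>i<n. a i * inter n (x i) (x j) + b i * inter n (y i) (x j))" by (rule inter_comb)
  also have "\<dots> = (\<Sum>i<n. - b i * of_bool (i = j))"
    proof (rule sum.cong)
    fix i assume "i \<in> {..<n}"
    then have "inter n (y i) (x j) = - of_bool (i = j)" using tab j inter_antisym[of n "y i" "x j"] by auto
    then show "a i * inter n (x i) (x j) + b i * inter n (y i) (x j) = - b i * of_bool (i = j)"
      using tab j \<open>i \<in> {..<n}\<close> by simp
  qed simp
  also have "\<dots> = - b j" using j by (simp add: sum_negf)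
  finally show "b j = 0" by simp
qed
  show ?thesis unfolding symplectic_basis_def using assms(1) tab indep assms(3) unfolding sp_def by blast
qed

lemma sb_span: "symplectic_basis n x y \<Longrightarrow> H1 n \<subseteq> sp n x y"
  unfolding symplectic_basis_def sp_def by blast

lemma sb_move:
  assumes "symplectic_basis n x y"
    and "\<forall>j<n. x' j \<in> H1 n \<and> y' j \<in> H1 n"
    and "\<forall>i<n. \<forall>j<n. inter n (x' i) (y' j) = (if i = j then 1 else 0)
                 \<and> inter n (x' i) (x' j) = 0 \<and> inter n (y' i) (y' j) = 0"
    and "\<forall>j<n. x j \<in> sp n x' y' \<and> y j \<in> sp n x' y'"
  shows "symplectic_basis n x' y'"
proof (rule sb_intro[OF assms(2,3)])
  show "H1 n \<subseteq> sp n x' y'" using sb_span[OF assms(1)] sp_mono[OF assms(4)] by blast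
qed



definition GI :: "complex set" where "GI = {of_int a + \<i> * of_int b | a b :: int. True}"

definition T1 :: "nat \<Rightarrow> int \<Rightarrow> (nat\<Rightarrow>nat\<Rightarrow>int) \<times> (nat\<Rightarrow>nat\<Rightarrow>int) \<Rightarrow> (nat\<Rightarrow>nat\<Rightarrow>int) \<times> (nat\<Rightarrow>nat\<Rightarrow>int)" where
  "T1 j c s = ((fst s)(j := lc c (fst s j) (snd s j)), snd s)"
definition T2 :: "nat \<Rightarrow> int \<Rightarrow> (nat\<Rightarrow>nat\<Rightarrow>int) \<times> (nat\<Rightarrow>nat\<Rightarrow>int) \<Rightarrow> (nat\<Rightarrow>nat\<Rightarrow>int) \<times> (nat\<Rightarrow>nat\<Rightarrow>int)" where
  "T2 j c s = (fst s, (snd s)(j := lc c (snd s j) (fst s j)))"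
definition M3 :: "nat \<Rightarrow> nat \<Rightarrow> int \<Rightarrow> (nat\<Rightarrow>nat\<Rightarrow>int) \<times> (nat\<Rightarrow>nat\<Rightarrow>int) \<Rightarrow> (nat\<Rightarrow>nat\<Rightarrow>int) \<times> (nat\<Rightarrow>nat\<Rightarrow>int)" where
  "M3 i j c s = ((fst s)(i := lc c (fst s i) (fst s j)), (snd s)(j := lc (-c) (snd s j) (snd s i)))"
definition M5 :: "nat \<Rightarrow> nat \<Rightarrow> int \<Rightarrow> (nat\<Rightarrow>nat\<Rightarrow>int) \<times> (nat\<Rightarrow>nat\<Rightarrow>int) \<Rightarrow> (nat\<Rightarrow>nat\<Rightarrow>int) \<times> (nat\<Rightarrow>nat\<Rightarrow>int)" where
  "M5 i j c s = (fst s, (snd s)(i := lc c (snd s i) (fst s j), j := lc c (snd s j) (fst s i)))"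

lemma lc_inv: "lc (-c) (lc c u v) v = u" by (simp add: lc_def fun_eq_iff)
lemma lc_inv2: "lc c (lc (-c) u v) v = u" by (simp add: lc_def fun_eq_iff)

lemma sb_H1: "symplectic_basis n x y \<Longrightarrow> j < n \<Longrightarrow> x j \<in> H1 n \<and> y j \<in> H1 n"
  unfolding symplectic_basis_def by blast

lemma sb_tab:
  assumes "symplectic_basis n x y" "i < n" "j < n"
  shows "inter n (x i) (y j) = of_bool (i = j)" "inter n (y j) (x i) = - of_bool (i = j)"
    "inter n (x i) (x j) = 0" "inter n (y i) (y j) = 0"
  using assms inter_antisym[of n "y j" "x i"] unfolding symplectic_basis_def by auto

lemmas tabsimps = sb_tab inter_lc_left inter_lc_right inter_self

lemma sb_T1:
  assumes sb: "symplectic_basis n x y" and j: "j < n"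
  shows "symplectic_basis n (fst (T1 j c (x,y))) (snd (T1 j c (x,y)))"
proof (rule sb_move[OF sb])
  show "\<forall>k<n. fst (T1 j c (x, y)) k \<in> H1 n \<and> snd (T1 j c (x, y)) k \<in> H1 n"
    using sb_H1[OF sb] by (auto simp: T1_def H1_lc)
  show "\<forall>a<n. \<forall>b<n. inter n (fst (T1 j c (x, y)) a) (snd (T1 j c (x, y)) b) = (if a = b then 1 else 0) \<and>
          inter n (fst (T1 j c (x, y)) a) (fst (T1 j c (x, y)) b) = 0 \<and>
          inter n (snd (T1 j c (x, y)) a) (snd (T1 j c (x, y)) b) = 0"
    using sb j by (auto simp: T1_def tabsimps)
  show "\<forall>k<n. x k \<in> sp n (fst (T1 j c (x, y))) (snd (T1 j c (x, y))) \<and> y k \<in> sp n (fst (T1 j c (x, y))) (snd (T1 j c (x, y)))"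
  proof (intro allI impI conjI)
    fix k assume k: "k < n"
    show "y k \<in> sp n (fst (T1 j c (x, y))) (snd (T1 j c (x, y)))"
      using sp_y[OF k, where x="fst (T1 j c (x, y))" and y="snd (T1 j c (x, y))"] by (simp add: T1_def)
    show "x k \<in> sp n (fst (T1 j c (x, y))) (snd (T1 j c (x, y)))"
    proof (cases "k = j")
      case True
      have "lc (-c) (fst (T1 j c (x, y)) j) (snd (T1 j c (x, y)) j) \<in> sp n (fst (T1 j c (x, y))) (snd (T1 j c (x, y)))"
        by (intro sp_lc sp_x sp_y j)
      then show ?thesis using True by (simp add: T1_def lc_inv)
    next
      case False
      then show ?thesis using sp_x[OF k, where x="fst (T1 j c (x, y))" and y="snd (T1 j c (x, y))"] by (simp add: T1_def)
    qed
  qed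
qed

lemma sb_T2:
  assumes sb: "symplectic_basis n x y" and j: "j < n"
  shows "symplectic_basis n (fst (T2 j c (x,y))) (snd (T2 j c (x,y)))"
proof -
  define x' where "x' = fst (T2 j c (x,y))"
  define y' where "y' = snd (T2 j c (x,y))"
  have X: "x' = x" "y' = y(j := lc c (y j) (x j))" unfolding x'_def y'_def T2_def by auto
  have "symplectic_basis n x' y'"
  proof (rule sb_move[OF sb])
    show "\<forall>k<n. x' k \<in> H1 n \<and> y' k \<in> H1 n"
      using sb_H1[OF sb] by (auto simp: X H1_lc)
    show "\<forall>a<n. \<forall>b<n. inter n (x' a) (y' b) = (if a = b then 1 else 0) \<and>
          inter n (x' a) (x' b) = 0 \<and> inter n (y' a) (y' b) = 0"
      using sb j by (auto simp: X tabsimps)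
    show "\<forall>k<n. x k \<in> sp n x' y' \<and> y k \<in> sp n x' y'"
    proof (intro allI impI conjI)
      fix k assume k: "k < n"
      show "x k \<in> sp n x' y'"
        using sp_x[OF k, where x="x'" and y="y'"] by (simp add: X)
      show "y k \<in> sp n x' y'"
      proof (cases "k = j")
        case True
        have "lc (-c) (y' j) (x' j) \<in> sp n x' y'"
          by (intro sp_lc sp_x sp_y j)
        then show ?thesis using True by (simp add: X lc_inv)
      next
        case False
        then show ?thesis using sp_y[OF k, where x="x'" and y="y'"] by (simp add: X)
      qed
    qed
  qed
  then show ?thesis unfolding x'_def y'_def .
qed

lemma sb_M3:
  assumes sb: "symplectic_basis n x y" and ij: "i < n" "j < n" "i \<noteq> j"
  shows "symplectic_basis n (fst (M3 i j c (x,y))) (snd (M3 i j c (x,y)))"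
proof -
  define x' where "x' = fst (M3 i j c (x,y))"
  define y' where "y' = snd (M3 i j c (x,y))"
  have X: "x' = x(i := lc c (x i) (x j))" "y' = y(j := lc (-c) (y j) (y i))" unfolding x'_def y'_def M3_def by auto
  have "symplectic_basis n x' y'"
  proof (rule sb_move[OF sb])
    show "\<forall>k<n. x' k \<in> H1 n \<and> y' k \<in> H1 n"
      using sb_H1[OF sb] ij by (auto simp: X H1_lc)
    show "\<forall>a<n. \<forall>b<n. inter n (x' a) (y' b) = (if a = b then 1 else 0) \<and>
          inter n (x' a) (x' b) = 0 \<and> inter n (y' a) (y' b) = 0"
      using sb ij by (auto simp: X tabsimps)
    show "\<forall>k<n. x k \<in> sp n x' y' \<and> y k \<in> sp n x' y'"
    proof (intro allI impI conjI)
      fix k assume k: "k < n"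
      show "x k \<in> sp n x' y'"
      proof (cases "k = i")
        case True
        have "lc (-c) (x' i) (x' j) \<in> sp n x' y'"
          by (intro sp_lc sp_x sp_y ij)
        then show ?thesis using True ij by (simp add: X lc_inv)
      next
        case False
        then show ?thesis using sp_x[OF k, where x="x'" and y="y'"] by (simp add: X)
      qed
      show "y k \<in> sp n x' y'"
      proof (cases "k = j")
        case True
        have "lc c (y' j) (y' i) \<in> sp n x' y'"
          by (intro sp_lc sp_x sp_y ij)
        then show ?thesis using True ij by (simp add: X lc_inv2)
      next
        case False
        then show ?thesis using sp_y[OF k, where x="x'" and y="y'"] by (simp add: X)
      qed
    qed
  qed
  then show ?thesis unfolding x'_def y'_def .
qed

lemma sb_M5:
  assumes sb: "symplectic_basis n x y" and ij: "i < n" "j < n" "i \<noteq> j"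
  shows "symplectic_basis n (fst (M5 i j c (x,y))) (snd (M5 i j c (x,y)))"
proof -
  define x' where "x' = fst (M5 i j c (x,y))"
  define y' where "y' = snd (M5 i j c (x,y))"
  have X: "x' = x" "y' = y(i := lc c (y i) (x j), j := lc c (y j) (x i))" unfolding x'_def y'_def M5_def by auto
  have "symplectic_basis n x' y'"
  proof (rule sb_move[OF sb])
    show "\<forall>k<n. x' k \<in> H1 n \<and> y' k \<in> H1 n"
      using sb_H1[OF sb] ij by (auto simp: X H1_lc)
    show "\<forall>a<n. \<forall>b<n. inter n (x' a) (y' b) = (if a = b then 1 else 0) \<and>
          inter n (x' a) (x' b) = 0 \<and> inter n (y' a) (y' b) = 0"
      using sb ij by (auto simp: X tabsimps)
    show "\<forall>k<n. x k \<in> sp n x' y' \<and> y k \<in> sp n x' y'"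
    proof (intro allI impI conjI)
      fix k assume k: "k < n"
      show "x k \<in> sp n x' y'"
        using sp_x[OF k, where x="x'" and y="y'"] by (simp add: X)
      show "y k \<in> sp n x' y'"
      proof (cases "k = j")
        case True
        have "lc (-c) (y' j) (x' i) \<in> sp n x' y'"
          by (intro sp_lc sp_x sp_y ij)
        then show ?thesis using True ij by (simp add: X lc_inv)
      next
        case False
        show ?thesis
        proof (cases "k = i")
          case True
          have "lc (-c) (y' i) (x' j) \<in> sp n x' y'"
            by (intro sp_lc sp_x sp_y ij)
          then show ?thesis using True ij by (simp add: X lc_inv)
        next
          case False
          then show ?thesis using sp_y[OF k, where x="x'" and y="y'"] \<open>k \<noteq> j\<close> by (simp add: X)
        qed
      qed
    qed
  qed
  then show ?thesis unfolding x'_def y'_def .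
qed



lemma euclid:
  fixes Q :: "'s \<Rightarrow> bool" and fa fb :: "'s \<Rightarrow> int" and m1 m2 :: "int \<Rightarrow> 's \<Rightarrow> 's"
  assumes q1: "\<And>c s. Q s \<Longrightarrow> Q (m1 c s)"
    and a1: "\<And>c s. Q s \<Longrightarrow> fa (m1 c s) = fa s + c * fb s"
    and b1: "\<And>c s. Q s \<Longrightarrow> fb (m1 c s) = fb s"
    and q2: "\<And>c s. Q s \<Longrightarrow> Q (m2 c s)"
    and a2: "\<And>c s. Q s \<Longrightarrow> fa (m2 c s) = fa s"
    and b2: "\<And>c s. Q s \<Longrightarrow> fb (m2 c s) = fb s + c * fa s"
    and "Q s"
  shows "\<exists>s'. Q s' \<and> fb s' = 0"
proof -
  have "\<And>s. nat \<bar>fb s\<bar> = N \<Longrightarrow> Q s \<Longrightarrow> \<exists>s'. Q s' \<and> fb s' = 0" for N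
  proof (induction N rule: less_induct)
    case (less N s)
    show ?case
    proof (cases "fb s = 0")
      case True then show ?thesis using less by blast
    next
      case False
      define s1 where "s1 = m1 (- (fa s div fb s)) s"
      have Q1: "Q s1" and A1: "fa s1 = fa s mod fb s" and B1: "fb s1 = fb s"
        using q1 a1 b1 less.prems unfolding s1_def
        by (auto simp: minus_div_mult_eq_mod[symmetric] algebra_simps)
      show ?thesis
      proof (cases "fa s1 = 0")
        case True
        define s2 where "s2 = m2 (-1) (m1 1 s1)"
        have "Q s2" "fb s2 = 0" unfolding s2_def using q1 q2 a1 b1 a2 b2 Q1 True by auto
        then show ?thesis by blast
      next
        case False
        define s2 where "s2 = m2 (- (fb s1 div fa s1)) s1"
        have Q2: "Q s2" and B2: "fb s2 = fb s1 mod fa s1"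
          using q2 b2 Q1 unfolding s2_def
          by (auto simp: minus_div_mult_eq_mod[symmetric] algebra_simps)
        have "\<bar>fa s1\<bar> < \<bar>fb s\<bar>" using A1 \<open>fb s \<noteq> 0\<close>
          by (metis abs_mod_less)
        moreover have "\<bar>fb s2\<bar> < \<bar>fa s1\<bar>" using B2 False by (metis abs_mod_less)
        ultimately have "nat \<bar>fb s2\<bar> < N" using less.prems by linarith
        then show ?thesis using less.IH Q2 by blast
      qed
    qed
  qed
  then show ?thesis using assms(7) by blast
qed



locale setting =
  fixes n :: nat and chi :: "(nat \<Rightarrow> int) \<Rightarrow> complex"
  assumes n2: "2 \<le> n" and ch: "is_char n chi" and img: "chi ` H1 n = GI"
begin

lemma zero_H1: "(\<lambda>k. 0) \<in> H1 n" by (simp add: H1_def)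
lemma smul_H1: "w \<in> H1 n \<Longrightarrow> (\<lambda>k. c * w k) \<in> H1 n" by (simp add: H1_def)
lemma add_H1: "v \<in> H1 n \<Longrightarrow> w \<in> H1 n \<Longrightarrow> (\<lambda>k. v k + w k) \<in> H1 n" by (simp add: H1_def)

lemma chi_add: "v \<in> H1 n \<Longrightarrow> w \<in> H1 n \<Longrightarrow> chi (\<lambda>k. v k + w k) = chi v + chi w"
  using ch unfolding is_char_def by blast

lemma chi_zero: "chi (\<lambda>k. 0) = 0"
  using chi_add[OF zero_H1 zero_H1] by simp

lemma chi_neg: assumes "w \<in> H1 n" shows "chi (\<lambda>k. - w k) = - chi w"
proof -
  have "(\<lambda>k. - w k) \<in> H1 n" using smul_H1[OF assms, of "-1"] by simp
  from chi_add[OF this assms] show ?thesis by (simp add: chi_zero eq_neg_iff_add_eq_0)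
qed

lemma chi_nat: assumes "w \<in> H1 n" shows "chi (\<lambda>k. int m * w k) = of_nat m * chi w"
proof (induction m)
  case 0 then show ?case by (simp add: chi_zero)
next
  case (Suc m)
  have "(\<lambda>k. int (Suc m) * w k) = (\<lambda>k. int m * w k + w k)" by (simp add: algebra_simps)
  then show ?case using chi_add[OF smul_H1[OF assms] assms] Suc by (simp add: algebra_simps)
qed

lemma chi_smul: assumes "w \<in> H1 n" shows "chi (\<lambda>k. c * w k) = of_int c * chi w"
proof (cases "c \<ge> 0")
  case True
  define m where "m = nat c"
  have "c = int m" using True unfolding m_def by simp
  then show ?thesis using chi_nat[OF assms] by simp
next
  case False
  define m where "m = nat (- c)"
  have m: "c = - int m" using False unfolding m_def by simp
  have "chi (\<lambda>k. c * w k) = chi (\<lambda>k. - (int m * w k))" using m by simp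
  also have "\<dots> = - chi (\<lambda>k. int m * w k)" by (rule chi_neg[OF smul_H1[OF assms]])
  finally show ?thesis using chi_nat[OF assms] m by simp
qed

lemma chi_lc: "v \<in> H1 n \<Longrightarrow> w \<in> H1 n \<Longrightarrow> chi (lc c v w) = chi v + of_int c * chi w"
  unfolding lc_def by (simp add: chi_add smul_H1 chi_smul)

lemma chi_comb:
  assumes "\<forall>j<n. x j \<in> H1 n \<and> y j \<in> H1 n"
  shows "chi (\<lambda>k. \<Sum>j<n. a j * x j k + b j * y j k) = (\<Sum>j<n. of_int (a j) * chi (x j) + of_int (b j) * chi (y j))"
proof -
  have "m \<le> n \<Longrightarrow> (\<lambda>k. \<Sum>j<m. a j * x j k + b j * y j k) \<in> H1 n \<and>
     chi (\<lambda>k. \<Sum>j<m. a j * x j k + b j * y j k) = (\<Sum>j<m. of_int (a j) * chi (x j) + of_int (b j) * chi (y j))" for m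
  proof (induction m)
    case 0 then show ?case using zero_H1 chi_zero by simp
  next
    case (Suc m)
    have e: "(\<lambda>k. \<Sum>j<Suc m. a j * x j k + b j * y j k) =
       lc (b m) (lc (a m) (\<lambda>k. \<Sum>j<m. a j * x j k + b j * y j k) (x m)) (y m)"
      by (simp add: lc_def fun_eq_iff algebra_simps)
    have xm: "x m \<in> H1 n" "y m \<in> H1 n" using assms Suc.prems by auto
    show ?case unfolding e using Suc xm by (simp add: H1_lc chi_lc)
  qed
  then show ?thesis by simp
qed

lemma comb_value:
  assumes sb: "symplectic_basis n x y" and z: "z \<in> GI"
  shows "\<exists>a b. z = (\<Sum>j<n. of_int (a j) * chi (x j) + of_int (b j) * chi (y j))"
proof -
  obtain v where v: "v \<in> H1 n" "z = chi v" using z img by blast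
  then obtain a b where "v = (\<lambda>k. \<Sum>j<n. a j * x j k + b j * y j k)" using sb_span[OF sb] unfolding sp_def by blast
  then show ?thesis using v chi_comb[of x y a b] sb_H1[OF sb] by auto
qed

lemma basis_GI: "symplectic_basis n x y \<Longrightarrow> j < n \<Longrightarrow> chi (x j) \<in> GI \<and> chi (y j) \<in> GI"
  using sb_H1 img by blast

end


lemma sum_change2:
  fixes f f' :: "nat \<Rightarrow> real"
  assumes "finite A" "i \<in> A" "j \<in> A" "i \<noteq> j" "\<forall>k\<in>A. k \<noteq> i \<longrightarrow> k \<noteq> j \<longrightarrow> f' k = f k"
  shows "sum f' A = sum f A + (f' i - f i) + (f' j - f j)"
proof -
  have r: "sum g A = g i + g j + sum g (A - {i} - {j})" for g :: "nat \<Rightarrow> real"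
    using assms by (simp add: sum.remove[of A i] sum.remove[of "A - {i}" j])
  have "sum f' (A - {i} - {j}) = sum f (A - {i} - {j})" using assms(5) by (intro sum.cong) auto
  then show ?thesis using r[of f] r[of f'] by simp
qed

context setting begin

definition om :: "(nat\<Rightarrow>nat\<Rightarrow>int) \<times> (nat\<Rightarrow>nat\<Rightarrow>int) \<Rightarrow> real" where
  "om s = (\<Sum>j<n. Im (cnj (chi (fst s j)) * chi (snd s j)))"
definition Q0 where "Q0 s \<longleftrightarrow> symplectic_basis n (fst s) (snd s) \<and> om s = omega n chi"

lemma Q0_sb: "Q0 s \<Longrightarrow> symplectic_basis n (fst s) (snd s)" by (simp add: Q0_def)

lemma Q0_H1: "Q0 s \<Longrightarrow> j < n \<Longrightarrow> fst s j \<in> H1 n \<and> snd s j \<in> H1 n"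
  using sb_H1 Q0_sb by blast

lemma T1_val:
  assumes "Q0 s" "j < n"
  shows "chi (fst (T1 j c s) k) = (if k = j then chi (fst s j) + of_int c * chi (snd s j) else chi (fst s k))"
    "snd (T1 j c s) = snd s"
  using Q0_H1[OF assms] by (auto simp: T1_def chi_lc)

lemma T2_val:
  assumes "Q0 s" "j < n"
  shows "chi (snd (T2 j c s) k) = (if k = j then chi (snd s j) + of_int c * chi (fst s j) else chi (snd s k))"
    "fst (T2 j c s) = fst s"
  using Q0_H1[OF assms] by (auto simp: T2_def chi_lc)

lemma M3_val:
  assumes "Q0 s" "i < n" "j < n"
  shows "chi (fst (M3 i j c s) k) = (if k = i then chi (fst s i) + of_int c * chi (fst s j) else chi (fst s k))"
    "chi (snd (M3 i j c s) k) = (if k = j then chi (snd s j) - of_int c * chi (snd s i) else chi (snd s k))"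
  using Q0_H1[OF assms(1,2)] Q0_H1[OF assms(1,3)] by (auto simp: M3_def chi_lc)

lemma M5_val:
  assumes "Q0 s" "i < n" "j < n" "i \<noteq> j"
  shows "fst (M5 i j c s) = fst s"
    "chi (snd (M5 i j c s) k) = (if k = i then chi (snd s i) + of_int c * chi (fst s j)
        else if k = j then chi (snd s j) + of_int c * chi (fst s i) else chi (snd s k))"
  using Q0_H1[OF assms(1,2)] Q0_H1[OF assms(1,3)] assms(4) by (auto simp: M5_def chi_lc)

lemma Q0_T1: assumes "Q0 s" "j < n" shows "Q0 (T1 j c s)"
proof -
  have sb: "symplectic_basis n (fst (T1 j c s)) (snd (T1 j c s))"
    using sb_T1[OF Q0_sb[OF assms(1)] assms(2), of c] by simp
  have "om (T1 j c s) = om s" unfolding om_def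
    by (rule sum.cong) (auto simp: T1_val[OF assms] algebra_simps)
  then show ?thesis using sb assms(1) by (simp add: Q0_def)
qed

lemma Q0_T2: assumes "Q0 s" "j < n" shows "Q0 (T2 j c s)"
proof -
  have sb: "symplectic_basis n (fst (T2 j c s)) (snd (T2 j c s))"
    using sb_T2[OF Q0_sb[OF assms(1)] assms(2), of c] by simp
  have "om (T2 j c s) = om s" unfolding om_def
    by (rule sum.cong) (auto simp: T2_val[OF assms] algebra_simps)
  then show ?thesis using sb assms(1) by (simp add: Q0_def)
qed

lemma Q0_M3: assumes "Q0 s" "i < n" "j < n" "i \<noteq> j" shows "Q0 (M3 i j c s)"
proof -
  have sb: "symplectic_basis n (fst (M3 i j c s)) (snd (M3 i j c s))"
    using sb_M3[OF Q0_sb[OF assms(1)] assms(2-4), of c] by simp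
  define f' where "f' = (\<lambda>k. Im (cnj (chi (fst (M3 i j c s) k)) * chi (snd (M3 i j c s) k)))"
  define f where "f = (\<lambda>k. Im (cnj (chi (fst s k)) * chi (snd s k)))"
  have "sum f' {..<n} = sum f {..<n} + (f' i - f i) + (f' j - f j)"
    by (rule sum_change2) (use assms in \<open>auto simp: f'_def f_def M3_val[OF assms(1-3)]\<close>)
  moreover have "(f' i - f i) + (f' j - f j) = 0"
    using assms by (simp add: f'_def f_def M3_val[OF assms(1-3)] algebra_simps)
  ultimately have "om (M3 i j c s) = om s" unfolding om_def f'_def f_def by linarith
  then show ?thesis using sb assms(1) by (simp add: Q0_def)
qed

lemma Q0_M5: assumes "Q0 s" "i < n" "j < n" "i \<noteq> j" shows "Q0 (M5 i j c s)"
proof -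
  have sb: "symplectic_basis n (fst (M5 i j c s)) (snd (M5 i j c s))"
    using sb_M5[OF Q0_sb[OF assms(1)] assms(2-4), of c] by simp
  define f' where "f' = (\<lambda>k. Im (cnj (chi (fst (M5 i j c s) k)) * chi (snd (M5 i j c s) k)))"
  define f where "f = (\<lambda>k. Im (cnj (chi (fst s k)) * chi (snd s k)))"
  have "sum f' {..<n} = sum f {..<n} + (f' i - f i) + (f' j - f j)"
    by (rule sum_change2) (use assms in \<open>auto simp: f'_def f_def M5_val[OF assms(1-4)]\<close>)
  moreover have "(f' i - f i) + (f' j - f j) = 0"
    using assms by (simp add: f'_def f_def M5_val[OF assms(1-4)] algebra_simps)
  ultimately have "om (M5 i j c s) = om s" unfolding om_def f'_def f_def by linarith
  then show ?thesis using sb assms(1) by (simp add: Q0_def)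
qed

end


lemma floor_lin: "x \<in> \<int> \<Longrightarrow> y \<in> \<int> \<Longrightarrow> \<lfloor>x + of_int c * y\<rfloor> = \<lfloor>x\<rfloor> + c * \<lfloor>y\<rfloor>"
proof -
  assume "x \<in> \<int>" "y \<in> \<int>"
  then obtain a b where "x = of_int a" "y = of_int b" by (auto elim!: Ints_cases)
  then have "x + of_int c * y = of_int (a + c * b)" by simp
  then show ?thesis using \<open>x = of_int a\<close> \<open>y = of_int b\<close> by (metis floor_of_int)
qed

lemma floor_mul: "y \<in> \<int> \<Longrightarrow> \<lfloor>of_int c * y\<rfloor> = c * \<lfloor>y\<rfloor>"
  by (metis add_0 floor_lin floor_of_int of_int_0 mult_zero_left add.commute Ints_0)

lemma floor0: "x \<in> \<int> \<Longrightarrow> \<lfloor>x\<rfloor> = 0 \<Longrightarrow> x = (0::real)"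
  by (auto elim!: Ints_cases)

lemma GI_Ints: "z \<in> GI \<Longrightarrow> Re z \<in> \<int> \<and> Im z \<in> \<int>"
  unfolding GI_def by auto

lemma inter_stdx: "i < n \<Longrightarrow> inter n (std_x i) w = w (2*i+1)"
proof -
  assume i: "i < n"
  have "inter n (std_x i) w = (\<Sum>l<n. if l = i then w (2*i+1) else 0)"
    unfolding inter_def by (rule sum.cong) (auto simp: std_x_def)
  then show ?thesis using i by simp
qed

lemma inter_stdy: "i < n \<Longrightarrow> inter n (std_y i) w = - w (2*i)"
proof -
  assume i: "i < n"
  have "inter n (std_y i) w = (\<Sum>l<n. if l = i then - w (2*i) else 0)"
    unfolding inter_def by (rule sum.cong) (auto simp: std_y_def)
  then show ?thesis using i by simp
qed

lemma std_sb: "symplectic_basis n std_x std_y"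
proof (rule sb_intro)
  show "\<forall>j<n. std_x j \<in> H1 n \<and> std_y j \<in> H1 n" by (auto simp: H1_def std_x_def std_y_def)
  show "\<forall>i<n. \<forall>j<n. inter n (std_x i) (std_y j) = (if i = j then 1 else 0) \<and>
          inter n (std_x i) (std_x j) = 0 \<and> inter n (std_y i) (std_y j) = 0"
    by (auto simp: inter_stdx inter_stdy) (auto simp: std_x_def std_y_def)
  show "H1 n \<subseteq> sp n std_x std_y"
  proof
    fix v assume v: "v \<in> H1 n"
    have vk: "v k = (\<Sum>j<n. v (2*j) * std_x j k + v (2*j+1) * std_y j k)" for k
    proof (cases "k < 2*n")
      case True
      have "(\<Sum>j<n. v (2*j) * std_x j k + v (2*j+1) * std_y j k) = (\<Sum>j<n. if j = k div 2 then v k else 0)"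
        by (rule sum.cong) (auto simp: std_x_def std_y_def)
      also have "\<dots> = v k" using True by (simp add: div_less_iff_less_mult)
      finally show ?thesis by simp
    next
      case False
      then have "(\<Sum>j<n. v (2*j) * std_x j k + v (2*j+1) * std_y j k) = 0"
        by (intro sum.neutral) (auto simp: std_x_def std_y_def)
      then show ?thesis using v False by (simp add: H1_def)
    qed
    have "v = (\<lambda>k. \<Sum>j<n. (\<lambda>j. v (2*j)) j * std_x j k + (\<lambda>j. v (2*j+1)) j * std_y j k)" by (rule ext, rule vk)
    then show "v \<in> sp n std_x std_y" unfolding sp_def by (intro CollectI exI)
  qed
qed

context setting begin

lemma Q0_Ints: "Q0 s \<Longrightarrow> j < n \<Longrightarrow> Re (chi (fst s j)) \<in> \<int> \<and> Im (chi (fst s j)) \<in> \<int> \<and>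
   Re (chi (snd s j)) \<in> \<int> \<and> Im (chi (snd s j)) \<in> \<int>"
  using basis_GI[OF Q0_sb] GI_Ints by blast

lemma std_Q0: "Q0 (std_x, std_y)"
  unfolding Q0_def om_def omega_def using std_sb by simp

end


type_synonym st = "(nat\<Rightarrow>nat\<Rightarrow>int) \<times> (nat\<Rightarrow>nat\<Rightarrow>int)"

context setting begin

lemma stageA: "m \<le> n \<Longrightarrow> \<exists>s. Q0 s \<and> (\<forall>k<m. Im (chi (snd s k)) = 0)"
proof (induction m)
  case 0 show ?case using std_Q0 by blast
next
  case (Suc m)
  then obtain s where s: "Q0 s" "\<forall>k<m. Im (chi (snd s k)) = 0" by auto
  have mn: "m < n" using Suc.prems by simp
  define Q :: "st \<Rightarrow> bool" where "Q = (\<lambda>s. Q0 s \<and> (\<forall>k<m. Im (chi (snd s k)) = 0))"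
  define fa :: "st \<Rightarrow> int" where "fa = (\<lambda>s. \<lfloor>Im (chi (fst s m))\<rfloor>)"
  define fb :: "st \<Rightarrow> int" where "fb = (\<lambda>s. \<lfloor>Im (chi (snd s m))\<rfloor>)"
  have q1: "\<And>c s. Q s \<Longrightarrow> Q (T1 m c s)" unfolding Q_def using Q0_T1 T1_val mn by auto
  have a1: "\<And>c s. Q s \<Longrightarrow> fa (T1 m c s) = fa s + c * fb s"
    unfolding Q_def fa_def fb_def using Q0_Ints[OF _ mn] by (auto simp: T1_val[OF _ mn] floor_lin floor_mul)
  have b1: "\<And>c s. Q s \<Longrightarrow> fb (T1 m c s) = fb s"
    unfolding Q_def fb_def using T1_val mn by auto
  have q2: "\<And>c s. Q s \<Longrightarrow> Q (T2 m c s)" unfolding Q_def using Q0_T2 T2_val mn by auto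
  have a2: "\<And>c s. Q s \<Longrightarrow> fa (T2 m c s) = fa s"
    unfolding Q_def fa_def using T2_val mn by auto
  have b2: "\<And>c s. Q s \<Longrightarrow> fb (T2 m c s) = fb s + c * fa s"
    unfolding Q_def fa_def fb_def using Q0_Ints[OF _ mn] by (auto simp: T2_val[OF _ mn] floor_lin floor_mul)
  have "Q s" using s unfolding Q_def by auto
  from euclid[of Q "T1 m" fa fb "T2 m", OF q1 a1 b1 q2 a2 b2 this]
  obtain s' where "Q s'" "fb s' = 0" by blast
  then have "Im (chi (snd s' m)) = 0" using Q0_Ints[OF _ mn] floor0 unfolding Q_def fb_def by blast
  then show ?case using \<open>Q s'\<close> unfolding Q_def by (metis less_Suc_eq)
qed

lemma stageB: "1 \<le> m \<Longrightarrow> m \<le> n \<Longrightarrow> \<exists>s. Q0 s \<and> (\<forall>k<n. Im (chi (snd s k)) = 0) \<and>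
    (\<forall>k. 1 \<le> k \<and> k < m \<longrightarrow> Im (chi (fst s k)) = 0)"
proof (induction m)
  case 0 then show ?case by simp
next
  case (Suc m)
  show ?case
  proof (cases "m = 0")
    case True then show ?thesis using stageA[of n] by auto
  next
    case False
    then obtain s where s: "Q0 s" "\<forall>k<n. Im (chi (snd s k)) = 0" "\<forall>k. 1 \<le> k \<and> k < m \<longrightarrow> Im (chi (fst s k)) = 0"
      using Suc by auto
    have mn: "m < n" "0 < n" "m \<noteq> 0" "0 \<noteq> m" using Suc.prems False by auto
    define Q :: "st \<Rightarrow> bool" where "Q = (\<lambda>s. Q0 s \<and> (\<forall>k<n. Im (chi (snd s k)) = 0) \<and>
      (\<forall>k. 1 \<le> k \<and> k < m \<longrightarrow> Im (chi (fst s k)) = 0))"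
    define fa :: "st \<Rightarrow> int" where "fa = (\<lambda>s. \<lfloor>Im (chi (fst s 0))\<rfloor>)"
    define fb :: "st \<Rightarrow> int" where "fb = (\<lambda>s. \<lfloor>Im (chi (fst s m))\<rfloor>)"
    have q1: "\<And>c s. Q s \<Longrightarrow> Q (M3 0 m c s)" unfolding Q_def using Q0_M3 M3_val mn by auto
    have a1: "\<And>c s. Q s \<Longrightarrow> fa (M3 0 m c s) = fa s + c * fb s"
      unfolding Q_def fa_def fb_def using Q0_Ints[OF _ mn(1)] Q0_Ints[OF _ mn(2)] mn
      by (auto simp: M3_val[OF _ mn(2,1)] floor_lin floor_mul)
    have b1: "\<And>c s. Q s \<Longrightarrow> fb (M3 0 m c s) = fb s"
      unfolding Q_def fb_def using M3_val mn by auto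
    have q2: "\<And>c s. Q s \<Longrightarrow> Q (M3 m 0 c s)" unfolding Q_def using Q0_M3 M3_val mn by auto
    have a2: "\<And>c s. Q s \<Longrightarrow> fa (M3 m 0 c s) = fa s"
      unfolding Q_def fa_def using M3_val mn by auto
    have b2: "\<And>c s. Q s \<Longrightarrow> fb (M3 m 0 c s) = fb s + c * fa s"
      unfolding Q_def fa_def fb_def using Q0_Ints[OF _ mn(1)] Q0_Ints[OF _ mn(2)] mn
      by (auto simp: M3_val[OF _ mn(1,2)] floor_lin floor_mul)
    have "Q s" using s unfolding Q_def by auto
    from euclid[of Q "M3 0 m" fa fb "M3 m 0", OF q1 a1 b1 q2 a2 b2 this]
    obtain s' where "Q s'" "fb s' = 0" by blast
    then have "Im (chi (fst s' m)) = 0" using Q0_Ints[OF _ mn(1)] floor0 unfolding Q_def fb_def by blast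
    then show ?thesis using \<open>Q s'\<close> unfolding Q_def by (metis less_Suc_eq)
  qed
qed


lemma i_GI: "\<i> \<in> GI" unfolding GI_def by (rule CollectI, rule exI[of _ 0], rule exI[of _ 1]) simp
lemma one_GI: "1 \<in> GI" unfolding GI_def by (rule CollectI, rule exI[of _ 1], rule exI[of _ 0]) simp

lemma stageB2: "\<exists>s. Q0 s \<and> Im (chi (fst s 0)) = 0 \<and> Im (chi (snd s 0)) = 1 \<and>
    (\<forall>k. 1 \<le> k \<and> k < n \<longrightarrow> Im (chi (fst s k)) = 0 \<and> Im (chi (snd s k)) = 0)"
proof -
  have n0: "0 < n" using n2 by simp
  obtain s where s: "Q0 s" "\<forall>k<n. Im (chi (snd s k)) = 0" "\<forall>k. 1 \<le> k \<and> k < n \<longrightarrow> Im (chi (fst s k)) = 0"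
    using stageB[of n] n2 by auto
  obtain a b where ab: "\<i> = (\<Sum>j<n. of_int (a j) * chi (fst s j) + of_int (b j) * chi (snd s j))"
    using comb_value[OF Q0_sb[OF s(1)] i_GI] by blast
  have "1 = Im (\<Sum>j<n. of_int (a j) * chi (fst s j) + of_int (b j) * chi (snd s j))"
    by (subst ab[symmetric]) simp
  also have "\<dots> = (\<Sum>j<n. if j = 0 then of_int (a 0) * Im (chi (fst s 0)) else 0)"
    unfolding Im_sum by (rule sum.cong) (use s in auto)
  also have "\<dots> = of_int (a 0) * Im (chi (fst s 0))" using n0 by simp
  finally have e: "1 = of_int (a 0) * Im (chi (fst s 0))" .
  define g where "g = \<lfloor>Im (chi (fst s 0))\<rfloor>"
  have gI: "Im (chi (fst s 0)) = of_int g" unfolding g_def using Q0_Ints[OF s(1) n0] by (auto elim!: Ints_cases)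
  have "a 0 * g = 1" using e gI by (metis of_int_eq_1_iff of_int_mult)
  then have g2: "g * g = 1" by (auto simp: zmult_eq_1_iff)
  define s1 where "s1 = T2 0 g s"
  define s2 where "s2 = T1 0 (-g) s1"
  have Q1: "Q0 s1" unfolding s1_def using Q0_T2[OF s(1) n0] .
  have Q2: "Q0 s2" unfolding s2_def using Q0_T1[OF Q1 n0] .
  have v1: "chi (fst s1 k) = chi (fst s k)" "chi (snd s1 k) = (if k = 0 then chi (snd s 0) + of_int g * chi (fst s 0) else chi (snd s k))" for k
    unfolding s1_def using T2_val[OF s(1) n0] by auto
  have v2: "chi (snd s2 k) = chi (snd s1 k)" "chi (fst s2 k) = (if k = 0 then chi (fst s1 0) - of_int g * chi (snd s1 0) else chi (fst s1 k))" for k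
    unfolding s2_def using T1_val[OF Q1 n0] by auto
  have "Im (chi (snd s2 0)) = of_int (g * g)" using v1 v2 s(2) n0 gI by simp
  then have i1: "Im (chi (snd s2 0)) = 1" using g2 by simp
  have "Im (chi (fst s2 0)) = of_int g - of_int g * 1" using v1 v2 gI i1 by simp
  then have i0: "Im (chi (fst s2 0)) = 0" by simp
  show ?thesis using Q2 i0 i1 v1 v2 s by (intro exI[of _ s2]) auto
qed

end


context setting begin

definition IN :: "st \<Rightarrow> bool" where
  "IN s \<longleftrightarrow> Im (chi (fst s 0)) = 0 \<and> Im (chi (snd s 0)) = 1 \<and>
    (\<forall>k. 1 \<le> k \<and> k < n \<longrightarrow> Im (chi (fst s k)) = 0 \<and> Im (chi (snd s k)) = 0)"

lemma stageC: "1 \<le> m \<Longrightarrow> m \<le> n \<Longrightarrow> \<exists>s. Q0 s \<and> IN s \<and> (\<forall>k. 1 \<le> k \<and> k < m \<longrightarrow> chi (snd s k) = 0)"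
proof (induction m)
  case 0 then show ?case by simp
next
  case (Suc m)
  show ?case
  proof (cases "m = 0")
    case True then show ?thesis using stageB2 unfolding IN_def by auto
  next
    case False
    then obtain s where s: "Q0 s" "IN s" "\<forall>k. 1 \<le> k \<and> k < m \<longrightarrow> chi (snd s k) = 0"
      using Suc by auto
    have mn: "m < n" "m \<noteq> 0" "1 \<le> m" using Suc.prems False by auto
    define Q :: "st \<Rightarrow> bool" where "Q = (\<lambda>s. Q0 s \<and> IN s \<and> (\<forall>k. 1 \<le> k \<and> k < m \<longrightarrow> chi (snd s k) = 0))"
    define fa :: "st \<Rightarrow> int" where "fa = (\<lambda>s. \<lfloor>Re (chi (fst s m))\<rfloor>)"
    define fb :: "st \<Rightarrow> int" where "fb = (\<lambda>s. \<lfloor>Re (chi (snd s m))\<rfloor>)"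
    have q1: "\<And>c s. Q s \<Longrightarrow> Q (T1 m c s)" unfolding Q_def IN_def using Q0_T1 T1_val mn by auto
    have a1: "\<And>c s. Q s \<Longrightarrow> fa (T1 m c s) = fa s + c * fb s"
      unfolding Q_def fa_def fb_def using Q0_Ints[OF _ mn(1)] by (auto simp: T1_val[OF _ mn(1)] floor_lin floor_mul)
    have b1: "\<And>c s. Q s \<Longrightarrow> fb (T1 m c s) = fb s"
      unfolding Q_def fb_def using T1_val mn by auto
    have q2: "\<And>c s. Q s \<Longrightarrow> Q (T2 m c s)" unfolding Q_def IN_def using Q0_T2 T2_val mn by auto
    have a2: "\<And>c s. Q s \<Longrightarrow> fa (T2 m c s) = fa s"
      unfolding Q_def fa_def using T2_val mn by auto
    have b2: "\<And>c s. Q s \<Longrightarrow> fb (T2 m c s) = fb s + c * fa s"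
      unfolding Q_def fa_def fb_def using Q0_Ints[OF _ mn(1)] by (auto simp: T2_val[OF _ mn(1)] floor_lin floor_mul)
    have "Q s" using s unfolding Q_def by auto
    from euclid[of Q "T1 m" fa fb "T2 m", OF q1 a1 b1 q2 a2 b2 this]
    obtain s' where "Q s'" "fb s' = 0" by blast
    then have "Re (chi (snd s' m)) = 0" using Q0_Ints[OF _ mn(1)] floor0 unfolding Q_def fb_def by blast
    moreover have "Im (chi (snd s' m)) = 0" using \<open>Q s'\<close> mn unfolding Q_def IN_def by auto
    ultimately have "chi (snd s' m) = 0" by (simp add: complex_eq_iff)
    then show ?thesis using \<open>Q s'\<close> unfolding Q_def by (metis less_Suc_eq)
  qed
qed

lemma stageD: "2 \<le> m \<Longrightarrow> m \<le> n \<Longrightarrow> \<exists>s. Q0 s \<and> IN s \<and> (\<forall>k. 1 \<le> k \<and> k < n \<longrightarrow> chi (snd s k) = 0) \<and>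
   (\<forall>k. 2 \<le> k \<and> k < m \<longrightarrow> chi (fst s k) = 0)"
proof (induction m)
  case 0 then show ?case by simp
next
  case (Suc m)
  show ?case
  proof (cases "m = 1")
    case True
    obtain s where "Q0 s" "IN s" "\<forall>k. 1 \<le> k \<and> k < n \<longrightarrow> chi (snd s k) = 0" using stageC[of n] n2 by auto
    then show ?thesis using True by (intro exI[of _ s]) auto
  next
    case False
    then obtain s where s: "Q0 s" "IN s" "\<forall>k. 1 \<le> k \<and> k < n \<longrightarrow> chi (snd s k) = 0"
        "\<forall>k. 2 \<le> k \<and> k < m \<longrightarrow> chi (fst s k) = 0"
      using Suc by auto
    have mn: "m < n" "1 < n" "m \<noteq> 1" "1 \<noteq> m" "2 \<le> m" using Suc.prems False by auto
    define Q :: "st \<Rightarrow> bool" where "Q = (\<lambda>s. Q0 s \<and> IN s \<and> (\<forall>k. 1 \<le> k \<and> k < n \<longrightarrow> chi (snd s k) = 0) \<and>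
       (\<forall>k. 2 \<le> k \<and> k < m \<longrightarrow> chi (fst s k) = 0))"
    define fa :: "st \<Rightarrow> int" where "fa = (\<lambda>s. \<lfloor>Re (chi (fst s 1))\<rfloor>)"
    define fb :: "st \<Rightarrow> int" where "fb = (\<lambda>s. \<lfloor>Re (chi (fst s m))\<rfloor>)"
    have q1: "\<And>c s. Q s \<Longrightarrow> Q (M3 1 m c s)" unfolding Q_def IN_def using Q0_M3 M3_val mn by auto
    have a1: "fa (M3 1 m c s) = fa s + c * fb s" if "Q s" for c s
    proof -
      have q: "Q0 s" using that unfolding Q_def by simp
      have "chi (fst (M3 1 m c s) 1) = chi (fst s 1) + of_int c * chi (fst s m)" using M3_val[OF q mn(2,1)] by simp
      then show ?thesis unfolding fa_def fb_def using Q0_Ints[OF q mn(1)] Q0_Ints[OF q mn(2)] by (simp add: floor_lin floor_mul)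
    qed
    have b1: "\<And>c s. Q s \<Longrightarrow> fb (M3 1 m c s) = fb s"
      unfolding Q_def fb_def using M3_val mn by auto
    have q2: "\<And>c s. Q s \<Longrightarrow> Q (M3 m 1 c s)" unfolding Q_def IN_def using Q0_M3 M3_val mn by auto
    have a2: "\<And>c s. Q s \<Longrightarrow> fa (M3 m 1 c s) = fa s"
      unfolding Q_def fa_def using M3_val mn by auto
    have b2: "fb (M3 m 1 c s) = fb s + c * fa s" if "Q s" for c s
    proof -
      have q: "Q0 s" using that unfolding Q_def by simp
      have "chi (fst (M3 m 1 c s) m) = chi (fst s m) + of_int c * chi (fst s 1)" using M3_val[OF q mn(1,2)] by simp
      then show ?thesis unfolding fa_def fb_def using Q0_Ints[OF q mn(1)] Q0_Ints[OF q mn(2)] by (simp add: floor_lin floor_mul)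
    qed
    have "Q s" using s unfolding Q_def by auto
    from euclid[of Q "M3 1 m" fa fb "M3 m 1", OF q1 a1 b1 q2 a2 b2 this]
    obtain s' where "Q s'" "fb s' = 0" by blast
    then have "Re (chi (fst s' m)) = 0" using Q0_Ints[OF _ mn(1)] floor0 unfolding Q_def fb_def by blast
    moreover have "Im (chi (fst s' m)) = 0" using \<open>Q s'\<close> mn unfolding Q_def IN_def by auto
    ultimately have "chi (fst s' m) = 0" by (simp add: complex_eq_iff)
    then show ?thesis using \<open>Q s'\<close> unfolding Q_def by (metis less_Suc_eq)
  qed
qed

end


context setting begin

lemma om_final:
  assumes "Q0 s" "chi (fst s 0) = of_int W" "chi (snd s 0) = \<i>" "\<forall>k. 1 \<le> k \<and> k < n \<longrightarrow> chi (snd s k) = 0"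
  shows "omega n chi = of_int W"
proof -
  have "omega n chi = om s" using assms(1) by (simp add: Q0_def)
  also have "\<dots> = (\<Sum>j<n. if j = 0 then of_int W else 0)"
    unfolding om_def by (rule sum.cong) (use assms(2-4) in auto)
  also have "\<dots> = of_int W" using n2 by simp
  finally show ?thesis .
qed

lemma sum_two:
  fixes f :: "nat \<Rightarrow> complex"
  assumes "\<forall>k. 2 \<le> k \<and> k < n \<longrightarrow> f k = 0"
  shows "(\<Sum>j<n. f j) = f 0 + f 1"
proof -
  have "(\<Sum>j<n. f j) = (\<Sum>j<n. (if j = 0 then f 0 else 0) + (if j = 1 then f 1 else 0))"
    by (rule sum.cong) (use assms in auto)
  also have "\<dots> = f 0 + f 1" using n2 by (simp add: sum.distrib)
  finally show ?thesis .
qed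

lemma stageE: assumes opos: "omega n chi > 0" shows "\<exists>s. Q0 s \<and> chi (fst s 0) = of_real (omega n chi) \<and> chi (snd s 0) = \<i> \<and>
   (\<forall>j\<in>{1..<n}. chi (snd s j) = 0 \<and> (\<exists>a :: int. chi (fst s j) = of_int a \<and> 0 \<le> a \<and> real_of_int a < omega n chi))"
proof -
  have n0: "0 < n" "1 < n" "(0::nat) \<noteq> 1" "(1::nat) \<noteq> 0" using n2 by auto
  obtain s where s: "Q0 s" "IN s" "\<forall>k. 1 \<le> k \<and> k < n \<longrightarrow> chi (snd s k) = 0"
      "\<forall>k. 2 \<le> k \<and> k < n \<longrightarrow> chi (fst s k) = 0"
    using stageD[of n] n2 by auto
  define W where "W = \<lfloor>Re (chi (fst s 0))\<rfloor>"
  define t where "t = \<lfloor>Re (chi (snd s 0))\<rfloor>"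
  define d where "d = \<lfloor>Re (chi (fst s 1))\<rfloor>"
  have I0: "Re (chi (fst s 0)) \<in> \<int>" "Re (chi (snd s 0)) \<in> \<int>" "Re (chi (fst s 1)) \<in> \<int>"
    using Q0_Ints[OF s(1) n0(1)] Q0_Ints[OF s(1) n0(2)] by auto
  have p0: "chi (fst s 0) = of_int W" using I0 s(2) unfolding W_def IN_def by (auto simp: complex_eq_iff elim!: Ints_cases)
  have q0: "chi (snd s 0) = of_int t + \<i>" using I0 s(2) unfolding t_def IN_def by (auto simp: complex_eq_iff elim!: Ints_cases)
  have p1: "chi (fst s 1) = of_int d" using I0 s(2) n0 unfolding d_def IN_def by (auto simp: complex_eq_iff elim!: Ints_cases)
  have q1: "chi (snd s 1) = 0" using s(3) n0 by auto
  obtain a b where ab: "1 = (\<Sum>j<n. of_int (a j) * chi (fst s j) + of_int (b j) * chi (snd s j))"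
    using comb_value[OF Q0_sb[OF s(1)] one_GI] by blast
  also have "\<dots> = (of_int (a 0) * chi (fst s 0) + of_int (b 0) * chi (snd s 0)) + (of_int (a 1) * chi (fst s 1) + of_int (b 1) * chi (snd s 1))"
    by (rule sum_two) (use s in auto)
  finally have e: "1 = of_int (a 0) * of_int W + of_int (b 0) * (of_int t + \<i>) + of_int (a 1) * of_int d"
    using p0 q0 p1 q1 by simp
  have "b 0 = 0" using arg_cong[OF e, of Im] by simp
  then have "1 = real_of_int (a 0 * W + a 1 * d)" using arg_cong[OF e, of Re] by simp
  then have bez: "a 0 * W + a 1 * d = 1" by linarith
  define c where "c = - t * a 1"
  define s1 where "s1 = M5 0 1 c s"
  have Q1: "Q0 s1" unfolding s1_def by (rule Q0_M5[OF s(1) n0(1,2,3)])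
  have v1: "fst s1 = fst s" "chi (snd s1 k) = (if k = 0 then chi (snd s 0) + of_int c * chi (fst s 1)
        else if k = 1 then chi (snd s 1) + of_int c * chi (fst s 0) else chi (snd s k))" for k
    unfolding s1_def using M5_val[OF s(1) n0(1,2,3)] by auto
  define e0 where "e0 = - (t * a 0)"
  define s2 where "s2 = T2 0 e0 s1"
  have Q2: "Q0 s2" unfolding s2_def by (rule Q0_T2[OF Q1 n0(1)])
  have v2: "fst s2 = fst s1" "chi (snd s2 k) = (if k = 0 then chi (snd s1 0) + of_int e0 * chi (fst s1 0) else chi (snd s1 k))" for k
    unfolding s2_def using T2_val[OF Q1 n0(1)] by auto
  have "chi (snd s2 0) = of_int (t + c * d + e0 * W) + \<i>"
    using v1 v2 q0 p1 p0 by simp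
  moreover have "t + c * d + e0 * W = 0" unfolding c_def e0_def
  proof -
    have "t + - t * a 1 * d + - (t * a 0) * W = t * (1 - (a 0 * W + a 1 * d))" by (simp add: algebra_simps)
    then show "t + - t * a 1 * d + - (t * a 0) * W = 0" using bez by simp
  qed
  ultimately have q0': "chi (snd s2 0) = \<i>" by simp
  define Q :: "st \<Rightarrow> bool" where "Q = (\<lambda>s. Q0 s \<and> chi (fst s 0) = of_int W \<and> chi (snd s 0) = \<i> \<and>
     Im (chi (fst s 1)) = 0 \<and> Im (chi (snd s 1)) = 0 \<and> (\<forall>k. 2 \<le> k \<and> k < n \<longrightarrow> chi (fst s k) = 0 \<and> chi (snd s k) = 0))"
  have "Q s2" unfolding Q_def using Q2 q0' v1 v2 p0 p1 q1 s(3,4) n0 by auto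
  define fa :: "st \<Rightarrow> int" where "fa = (\<lambda>s. \<lfloor>Re (chi (fst s 1))\<rfloor>)"
  define fb :: "st \<Rightarrow> int" where "fb = (\<lambda>s. \<lfloor>Re (chi (snd s 1))\<rfloor>)"
  have qq1: "\<And>c s. Q s \<Longrightarrow> Q (T1 1 c s)" unfolding Q_def using Q0_T1 T1_val n0 by auto
  have a1: "fa (T1 1 c s) = fa s + c * fb s" if "Q s" for c s
  proof -
    have q: "Q0 s" using that unfolding Q_def by simp
    have "chi (fst (T1 1 c s) 1) = chi (fst s 1) + of_int c * chi (snd s 1)" using T1_val[OF q n0(2)] by simp
    then show ?thesis unfolding fa_def fb_def using Q0_Ints[OF q n0(2)] by (simp add: floor_lin floor_mul)
  qed
  have b1: "\<And>c s. Q s \<Longrightarrow> fb (T1 1 c s) = fb s"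
    unfolding Q_def fb_def using T1_val n0 by auto
  have qq2: "\<And>c s. Q s \<Longrightarrow> Q (T2 1 c s)" unfolding Q_def using Q0_T2 T2_val n0 by auto
  have a2: "\<And>c s. Q s \<Longrightarrow> fa (T2 1 c s) = fa s"
    unfolding Q_def fa_def using T2_val n0 by auto
  have b2: "fb (T2 1 c s) = fb s + c * fa s" if "Q s" for c s
  proof -
    have q: "Q0 s" using that unfolding Q_def by simp
    have "chi (snd (T2 1 c s) 1) = chi (snd s 1) + of_int c * chi (fst s 1)" using T2_val[OF q n0(2)] by simp
    then show ?thesis unfolding fa_def fb_def using Q0_Ints[OF q n0(2)] by (simp add: floor_lin floor_mul)
  qed
  from euclid[of Q "T1 1" fa fb "T2 1", OF qq1 a1 b1 qq2 a2 b2 \<open>Q s2\<close>]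
  obtain s3 where "Q s3" "fb s3 = 0" by blast
  then have Q3: "Q0 s3" and p03: "chi (fst s3 0) = of_int W" and q03: "chi (snd s3 0) = \<i>"
    and i13: "Im (chi (fst s3 1)) = 0" "Im (chi (snd s3 1)) = 0"
    and r3: "\<forall>k. 2 \<le> k \<and> k < n \<longrightarrow> chi (fst s3 k) = 0 \<and> chi (snd s3 k) = 0"
    unfolding Q_def by auto
  have "Re (chi (snd s3 1)) = 0" using \<open>fb s3 = 0\<close> Q0_Ints[OF Q3 n0(2)] floor0 unfolding fb_def by blast
  then have q13: "chi (snd s3 1) = 0" using i13 by (simp add: complex_eq_iff)
  have allq: "\<forall>k. 1 \<le> k \<and> k < n \<longrightarrow> chi (snd s3 k) = 0"
  proof (intro allI impI)
    fix k assume "1 \<le> k \<and> k < n"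
    then show "chi (snd s3 k) = 0" using q13 r3 by (cases "k = 1") auto
  qed
  have om: "omega n chi = of_int W" by (rule om_final[OF Q3 p03 q03 allq])
  then have Wpos: "W > 0" using opos by simp
  define d3 where "d3 = \<lfloor>Re (chi (fst s3 1))\<rfloor>"
  have p13: "chi (fst s3 1) = of_int d3" using Q0_Ints[OF Q3 n0(2)] i13 unfolding d3_def
    by (auto simp: complex_eq_iff elim!: Ints_cases)
  define k0 where "k0 = - (d3 div W)"
  define s4 where "s4 = M3 1 0 k0 s3"
  have Q4: "Q0 s4" unfolding s4_def by (rule Q0_M3[OF Q3 n0(2,1,4)])
  have v4: "chi (fst s4 k) = (if k = 1 then chi (fst s3 1) + of_int k0 * chi (fst s3 0) else chi (fst s3 k))"
    "chi (snd s4 k) = (if k = 0 then chi (snd s3 0) - of_int k0 * chi (snd s3 1) else chi (snd s3 k))" for k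
    unfolding s4_def using M3_val[OF Q3 n0(2,1)] by auto
  have "d3 + k0 * W = d3 mod W" unfolding k0_def by (simp add: minus_div_mult_eq_mod[symmetric] algebra_simps)
  then have p14: "chi (fst s4 1) = of_int (d3 mod W)" using v4 p13 p03 by (metis of_int_add of_int_mult)
  show ?thesis
  proof (intro exI[of _ s4] conjI ballI)
    show "Q0 s4" by (rule Q4)
    show "chi (fst s4 0) = of_real (omega n chi)" using v4 p03 om by simp
    show "chi (snd s4 0) = \<i>" using v4 q03 q13 by simp
    fix j assume j: "j \<in> {1..<n}"
    show "chi (snd s4 j) = 0" using v4 allq j by auto
    show "\<exists>a :: int. chi (fst s4 j) = of_int a \<and> 0 \<le> a \<and> real_of_int a < omega n chi"
    proof (cases "j = 1")
      case True
      then show ?thesis using p14 Wpos om by (intro exI[of _ "d3 mod W"]) auto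
    next
      case False
      then have "chi (fst s4 j) = 0" using v4 r3 j by auto
      then show ?thesis using opos by (intro exI[of _ 0]) auto
    qed
  qed
qed

end


theorem mainTheorem14:
  fixes n :: nat and chi :: "(nat \<Rightarrow> int) \<Rightarrow> complex"
  assumes "n \<ge> 2"
    and "is_char n chi"
    and "chi ` H1 n = {of_int a + \<i> * of_int b | a b :: int. True}"
    and "omega n chi > 0"
  shows "\<exists>x y. symplectic_basis n x y \<and>
           chi (x 0) = of_real (omega n chi) \<and> chi (y 0) = \<i> \<and>
           (\<forall>j\<in>{1..<n}. chi (y j) = 0 \<and>
              (\<exists>a :: int. chi (x j) = of_int a \<and> 0 \<le> a \<and> real_of_int a < omega n chi))"
proof -
  interpret setting n chi
    by unfold_locales (simp_all add: assms GI_def)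
  obtain s where "Q0 s" "chi (fst s 0) = of_real (omega n chi)" "chi (snd s 0) = \<i>"
    "\<forall>j\<in>{1..<n}. chi (snd s j) = 0 \<and> (\<exists>a :: int. chi (fst s j) = of_int a \<and> 0 \<le> a \<and> real_of_int a < omega n chi)"
    using stageE[OF assms(4)] by blast
  then show ?thesis using Q0_sb by blast
qed

end
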